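(* Let $\psi:V\to\mathbb R$ be an eigenfunction of $-A_\alpha$ with eigenvalue $\lambda\ge0$. Then for every $k\in\mathbb N$, the function $f_{\psi,k}:\Xi_k\to\mathbb R$, $f_{\psi,k}(\eta):=\sum_{x\in V}\psi(x)\eta_x$, is an eigenfunction of $-L_k$ with the same eigenvalue $\lambda$.
   Context: $V$ is a finite set with symmetric non-negative weights $c_{xy}=c_{yx}\ge0$ forming a connected graph, and $\alpha=(\alpha_x)_{x\in V}$ positive. $A_\alpha f(x)=\sum_{y}c_{xy}\alpha_y(f(y)-f(x))$ for $f:V\to\mathbb R$. $\Xi_k:=\{\eta\in\mathbb N_0^V:\sum_x\eta_x=k\}$ and $L_kf(\eta)=\sum_x\eta_x\sum_y c_{xy}(\alpha_y+\eta_y)(f(\eta-\delta_x+\delta_y)-f(\eta))$ for $f:\Xi_k\to\mathbb R$, where $\eta-\delta_x+\delta_y$ is obtained from $\eta$ by moving one particle from $x$ to $y$. An eigenfunction is required to be non-zero. *)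

theory Defs
  imports Complex_Main
begin

definition weighted_connected_graph :: "'v set \<Rightarrow> ('v \<Rightarrow> 'v \<Rightarrow> real) \<Rightarrow> bool" where
  "weighted_connected_graph V c \<longleftrightarrow>
     finite V \<and> V \<noteq> {} \<and>
     (\<forall>x\<in>V. \<forall>y\<in>V. c x y = c y x \<and> c x y \<ge> 0) \<and>
     (\<forall>x\<in>V. \<forall>y\<in>V. (\<lambda>a b. a \<in> V \<and> b \<in> V \<and> c a b > 0)\<^sup>*\<^sup>* x y)"

definition A_gen :: "'v set \<Rightarrow> ('v \<Rightarrow> 'v \<Rightarrow> real) \<Rightarrow> ('v \<Rightarrow> real) \<Rightarrow> ('v \<Rightarrow> real) \<Rightarrow> 'v \<Rightarrow> real" where
  "A_gen V c \<alpha> f x = (\<Sum>y\<in>V. c x y * \<alpha> y * (f y - f x))"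

definition Xi :: "'v set \<Rightarrow> nat \<Rightarrow> ('v \<Rightarrow> nat) set" where
  "Xi V k = {\<eta>. (\<forall>x. x \<notin> V \<longrightarrow> \<eta> x = 0) \<and> (\<Sum>x\<in>V. \<eta> x) = k}"

text \<open>eta - delta_x + delta_y (used only when eta x >= 1).\<close>
definition move :: "('v \<Rightarrow> nat) \<Rightarrow> 'v \<Rightarrow> 'v \<Rightarrow> ('v \<Rightarrow> nat)" where
  "move \<eta> x y = (\<lambda>z. \<eta> z - (if z = x then 1 else 0) + (if z = y then 1 else 0))"

definition L_gen :: "'v set \<Rightarrow> ('v \<Rightarrow> 'v \<Rightarrow> real) \<Rightarrow> ('v \<Rightarrow> real) \<Rightarrow> (('v \<Rightarrow> nat) \<Rightarrow> real) \<Rightarrow> ('v \<Rightarrow> nat) \<Rightarrow> real" where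
  "L_gen V c \<alpha> f \<eta> = (\<Sum>x\<in>V. real (\<eta> x) * (\<Sum>y\<in>V. c x y * (\<alpha> y + real (\<eta> y)) * (f (move \<eta> x y) - f \<eta>)))"

definition is_eigenfunction_A :: "'v set \<Rightarrow> ('v \<Rightarrow> 'v \<Rightarrow> real) \<Rightarrow> ('v \<Rightarrow> real) \<Rightarrow> ('v \<Rightarrow> real) \<Rightarrow> real \<Rightarrow> bool" where
  "is_eigenfunction_A V c \<alpha> \<psi> lam \<longleftrightarrow>
     (\<exists>x\<in>V. \<psi> x \<noteq> 0) \<and> (\<forall>x\<in>V. - A_gen V c \<alpha> \<psi> x = lam * \<psi> x)"

definition is_eigenfunction_L :: "'v set \<Rightarrow> ('v \<Rightarrow> 'v \<Rightarrow> real) \<Rightarrow> ('v \<Rightarrow> real) \<Rightarrow> nat \<Rightarrow> (('v \<Rightarrow> nat) \<Rightarrow> real) \<Rightarrow> real \<Rightarrow> bool" where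
  "is_eigenfunction_L V c \<alpha> k f lam \<longleftrightarrow>
     (\<exists>\<eta>\<in>Xi V k. f \<eta> \<noteq> 0) \<and> (\<forall>\<eta>\<in>Xi V k. - L_gen V c \<alpha> f \<eta> = lam * f \<eta>)"

definition f_lin :: "'v set \<Rightarrow> ('v \<Rightarrow> real) \<Rightarrow> ('v \<Rightarrow> nat) \<Rightarrow> real" where
  "f_lin V \<psi> \<eta> = (\<Sum>x\<in>V. \<psi> x * real (\<eta> x))"

end

theory Submission
  imports Defs
begin

lemma move_real:
  assumes "\<eta> x \<ge> 1"
  shows "real (move \<eta> x y z) = real (\<eta> z) - (if z = x then 1 else 0) + (if z = y then 1 else 0)"
  using assms unfolding move_def by (auto simp: of_nat_diff)

lemma f_lin_move:
  assumes "finite V" "x \<in> V" "y \<in> V" "\<eta> x \<ge> 1"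
  shows "f_lin V \<psi> (move \<eta> x y) = f_lin V \<psi> \<eta> - \<psi> x + \<psi> y"
proof -
  have "f_lin V \<psi> (move \<eta> x y) = (\<Sum>z\<in>V. \<psi> z * real (\<eta> z) - (if z = x then \<psi> z else 0) + (if z = y then \<psi> z else 0))"
    unfolding f_lin_def using assms(4) by (intro sum.cong) (auto simp: move_real algebra_simps)
  also have "\<dots> = f_lin V \<psi> \<eta> - \<psi> x + \<psi> y"
    using assms unfolding f_lin_def by (simp add: sum.distrib sum_subtractf)
  finally show ?thesis .
qed

theorem lemma2p1:
  fixes V :: "'v set" and c :: "'v \<Rightarrow> 'v \<Rightarrow> real" and \<alpha> \<psi> :: "'v \<Rightarrow> real"
    and lam :: real and k :: nat
  assumes "weighted_connected_graph V c"
    and "\<forall>x\<in>V. \<alpha> x > 0"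
    and "is_eigenfunction_A V c \<alpha> \<psi> lam"
    and "lam \<ge> 0"
    and "k \<ge> 1"
  shows "is_eigenfunction_L V c \<alpha> k (f_lin V \<psi>) lam"
proof -
  have fin: "finite V" and sym: "\<And>x y. x \<in> V \<Longrightarrow> y \<in> V \<Longrightarrow> c x y = c y x"
    using assms(1) unfolding weighted_connected_graph_def by auto
  obtain x0 where x0: "x0 \<in> V" "\<psi> x0 \<noteq> 0" and eig: "\<forall>x\<in>V. - A_gen V c \<alpha> \<psi> x = lam * \<psi> x"
    using assms(3) unfolding is_eigenfunction_A_def by auto
  define \<eta>0 where "\<eta>0 = (\<lambda>z. if z = x0 then k else 0)"
  have "\<eta>0 \<in> Xi V k" using x0 fin unfolding Xi_def \<eta>0_def by (auto simp: sum.delta)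
  moreover have "f_lin V \<psi> \<eta>0 \<noteq> 0"
  proof -
    have "f_lin V \<psi> \<eta>0 = (\<Sum>z\<in>V. if z = x0 then \<psi> z * real k else 0)"
      unfolding f_lin_def \<eta>0_def by (intro sum.cong) auto
    also have "\<dots> = \<psi> x0 * real k" using fin x0 by (simp add: sum.delta)
    finally show ?thesis using x0 assms(5) by simp
  qed
  moreover have "- L_gen V c \<alpha> (f_lin V \<psi>) \<eta> = lam * f_lin V \<psi> \<eta>" if "\<eta> \<in> Xi V k" for \<eta>
  proof -
    define S where "S = (\<Sum>x\<in>V. \<Sum>y\<in>V. real (\<eta> x) * real (\<eta> y) * c x y * (\<psi> y - \<psi> x))"
    have "S = (\<Sum>y\<in>V. \<Sum>x\<in>V. real (\<eta> x) * real (\<eta> y) * c x y * (\<psi> y - \<psi> x))"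
      unfolding S_def by (rule sum.swap)
    also have "\<dots> = (\<Sum>y\<in>V. \<Sum>x\<in>V. - (real (\<eta> y) * real (\<eta> x) * c y x * (\<psi> x - \<psi> y)))"
      by (intro sum.cong refl) (auto simp: sym algebra_simps)
    also have "\<dots> = - S" unfolding S_def by (simp add: sum_negf)
    finally have S0: "S = 0" by simp
    have "L_gen V c \<alpha> (f_lin V \<psi>) \<eta> =
      (\<Sum>x\<in>V. real (\<eta> x) * (\<Sum>y\<in>V. c x y * (\<alpha> y + real (\<eta> y)) * (\<psi> y - \<psi> x)))"
      unfolding L_gen_def
    proof (intro sum.cong refl)
      fix x assume x: "x \<in> V"
      show "real (\<eta> x) * (\<Sum>y\<in>V. c x y * (\<alpha> y + real (\<eta> y)) * (f_lin V \<psi> (move \<eta> x y) - f_lin V \<psi> \<eta>)) =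
        real (\<eta> x) * (\<Sum>y\<in>V. c x y * (\<alpha> y + real (\<eta> y)) * (\<psi> y - \<psi> x))"
      proof (cases "\<eta> x = 0")
        case False
        then have "\<eta> x \<ge> 1" by simp
        then show ?thesis using fin x by (simp add: f_lin_move)
      qed simp
    qed
    also have "\<dots> = (\<Sum>x\<in>V. real (\<eta> x) * A_gen V c \<alpha> \<psi> x) + S"
      unfolding S_def A_gen_def
      by (simp add: sum.distrib[symmetric] sum_distrib_left algebra_simps)
    also have "\<dots> = (\<Sum>x\<in>V. real (\<eta> x) * (- lam * \<psi> x))"
    proof -
      have "\<And>x. x \<in> V \<Longrightarrow> A_gen V c \<alpha> \<psi> x = - lam * \<psi> x"
        using eig by (metis minus_equation_iff mult_minus_left)
      then show ?thesis using S0 by (simp cong: sum.cong)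
    qed
    also have "\<dots> = - lam * f_lin V \<psi> \<eta>"
      unfolding f_lin_def by (simp add: sum_distrib_left algebra_simps)
    finally show ?thesis by simp
  qed
  ultimately show ?thesis unfolding is_eigenfunction_L_def by blast
qed

end
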